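(* For each $k\in\{1,2\}$ there exist a probability space and random variables $A_1,A_2,B_1,B_2,C_k$ on it, each taking values in $\{1,-1\}$, such that $\langle A_i\rangle=\langle B_i\rangle=\langle C_k\rangle=0$ and $\langle A_iB_j\rangle=\langle A_iC_k\rangle=\langle B_iC_k\rangle=0$ for all $i,j\in\{1,2\}$, and moreover: for $k=1$: $\langle A_1B_1C_1\rangle=-1$, $\langle A_2B_2C_1\rangle=-1$, $\langle A_1B_2C_1\rangle=\langle A_2B_1C_1\rangle=0$; for $k=2$: $\langle A_2B_1C_2\rangle=-1$, $\langle A_1B_2C_2\rangle=+1$, $\langle A_2B_2C_2\rangle=\langle A_1B_1C_2\rangle=0$. Furthermore, in every such model for $k=1$ one has $\langle A_1A_2B_1B_2\rangle=1$, in every such model for $k=2$ one has $\langle A_1A_2B_1B_2\rangle=-1$, and the two models can be chosen so that all other correlations among $A_1,A_2,B_1,B_2$ (i.e. the joint distribution of every proper subfamily of these four variables, including $\langle A_1A_2\rangle=\langle B_1B_2\rangle=0$ and $\langle A_iB_1B_2\rangle=\langle B_iA_1A_2\rangle=0$) coincide in the two models.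
   Context: $\langle\cdot\rangle$ denotes expectation. These correlations are the quantum-mechanical predictions of the Greenberger–Horne–Shimony–Zeilinger state $\tfrac{1}{\sqrt2}(|+++\rangle-|---\rangle)$ (in the eigenbasis of $\sigma_z$ for three spin-$1/2$ particles) for the observables $A_1=-\sigma^1_x$, $A_2=-\sigma^1_y$, $B_1=\sigma^2_y$, $B_2=\sigma^2_x$, $C_1=\sigma^3_y$, $C_2=\sigma^3_x$, where $\sigma^i_k$ are Pauli matrices on particle $i$; the compatible sets (contexts) are those containing at most one $A$, one $B$ and one $C$. Thus each model reproduces all quantum predictions for the four contexts $\{A_i,B_j,C_k\}$ with the given $k$. *)

theory Defs
  imports "HOL-Probability.Probability"
begin

definition pm1_rv :: "'a measure \<Rightarrow> ('a \<Rightarrow> real) \<Rightarrow> bool" where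
  "pm1_rv M X \<longleftrightarrow> X \<in> borel_measurable M \<and> (\<forall>\<omega>\<in>space M. X \<omega> \<in> {1, -1})"

definition corr :: "'a measure \<Rightarrow> ('a \<Rightarrow> real) list \<Rightarrow> real" where
  "corr M Xs = integral\<^sup>L M (\<lambda>\<omega>. prod_list (map (\<lambda>X. X \<omega>) Xs))"

definition base_model :: "'a measure \<Rightarrow> ('a \<Rightarrow> real) \<Rightarrow> ('a \<Rightarrow> real) \<Rightarrow> ('a \<Rightarrow> real)
    \<Rightarrow> ('a \<Rightarrow> real) \<Rightarrow> ('a \<Rightarrow> real) \<Rightarrow> bool" where
  "base_model M A1 A2 B1 B2 C \<longleftrightarrow>
     prob_space M \<and>
     pm1_rv M A1 \<and> pm1_rv M A2 \<and> pm1_rv M B1 \<and> pm1_rv M B2 \<and> pm1_rv M C \<and>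
     (\<forall>X\<in>{A1, A2, B1, B2, C}. corr M [X] = 0) \<and>
     (\<forall>X\<in>{A1, A2}. \<forall>Y\<in>{B1, B2}. corr M [X, Y] = 0) \<and>
     (\<forall>X\<in>{A1, A2}. corr M [X, C] = 0) \<and>
     (\<forall>Y\<in>{B1, B2}. corr M [Y, C] = 0)"

definition model1 :: "'a measure \<Rightarrow> ('a \<Rightarrow> real) \<Rightarrow> ('a \<Rightarrow> real) \<Rightarrow> ('a \<Rightarrow> real)
    \<Rightarrow> ('a \<Rightarrow> real) \<Rightarrow> ('a \<Rightarrow> real) \<Rightarrow> bool" where
  "model1 M A1 A2 B1 B2 C1 \<longleftrightarrow> base_model M A1 A2 B1 B2 C1 \<and>
     corr M [A1, B1, C1] = -1 \<and> corr M [A2, B2, C1] = -1 \<and>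
     corr M [A1, B2, C1] = 0 \<and> corr M [A2, B1, C1] = 0"

definition model2 :: "'a measure \<Rightarrow> ('a \<Rightarrow> real) \<Rightarrow> ('a \<Rightarrow> real) \<Rightarrow> ('a \<Rightarrow> real)
    \<Rightarrow> ('a \<Rightarrow> real) \<Rightarrow> ('a \<Rightarrow> real) \<Rightarrow> bool" where
  "model2 M A1 A2 B1 B2 C2 \<longleftrightarrow> base_model M A1 A2 B1 B2 C2 \<and>
     corr M [A2, B1, C2] = -1 \<and> corr M [A1, B2, C2] = 1 \<and>
     corr M [A2, B2, C2] = 0 \<and> corr M [A1, B1, C2] = 0"

definition fam4 :: "('a \<Rightarrow> real) \<Rightarrow> ('a \<Rightarrow> real) \<Rightarrow> ('a \<Rightarrow> real) \<Rightarrow> ('a \<Rightarrow> real)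
    \<Rightarrow> nat \<Rightarrow> 'a \<Rightarrow> real" where
  "fam4 A1 A2 B1 B2 i = (if i = 0 then A1 else if i = 1 then A2 else if i = 2 then B1 else B2)"

definition joint_distr :: "'a measure \<Rightarrow> (nat \<Rightarrow> 'a \<Rightarrow> real) \<Rightarrow> nat set \<Rightarrow> (nat \<Rightarrow> real) measure" where
  "joint_distr M X S = distr M (PiM S (\<lambda>_. borel)) (\<lambda>\<omega>. \<lambda>i\<in>S. X i \<omega>)"

end

theory Submission imports Defs begin


lemma pm1_AE:
  fixes f :: "'a \<Rightarrow> real"
  assumes P: "prob_space M" and fm: "f \<in> borel_measurable M"
    and v: "\<forall>\<omega>\<in>space M. f \<omega> \<in> {1, -1}" and I: "integral\<^sup>L M f = c" and c: "c = 1 \<or> c = -1"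
  shows "AE \<omega> in M. f \<omega> = c"
proof -
  interpret prob_space M by fact
  have intf: "integrable M f"
    by (rule integrable_const_bound[where B=1]) (use v fm in \<open>auto intro!: AE_I2\<close>)
  have inth: "integrable M (\<lambda>\<omega>. 1 - c * f \<omega>)" using intf by auto
  have "integral\<^sup>L M (\<lambda>\<omega>. 1 - c * f \<omega>) = 1 - c * c"
    using intf I by (simp add: prob_space)
  also have "\<dots> = 0" using c by auto
  finally have "integral\<^sup>L M (\<lambda>\<omega>. 1 - c * f \<omega>) = 0" .
  moreover have "AE \<omega> in M. 0 \<le> 1 - c * f \<omega>"
    using v c by (intro AE_I2) auto
  ultimately have "AE \<omega> in M. 1 - c * f \<omega> = 0"
    using integral_nonneg_eq_0_iff_AE[OF inth] by simp
  then show ?thesis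
  proof (rule AE_mp, intro AE_I2 impI)
    fix \<omega> assume "1 - c * f \<omega> = 0"
    then show "f \<omega> = c" using c by auto
  qed
qed

lemma pm_mult: "(a::real) \<in> {1,-1} \<Longrightarrow> b \<in> {1,-1} \<Longrightarrow> a * b \<in> {1,-1}" by auto

lemma corr3: "corr M [X, Y, Z] = integral\<^sup>L M (\<lambda>\<omega>. X \<omega> * Y \<omega> * Z \<omega>)"
  unfolding corr_def by (simp add: mult.assoc)

lemma part3:
  assumes m: "base_model M A1 A2 B1 B2 C"
    and h1: "corr M [X1, Y1, C] = c1" and h2: "corr M [X2, Y2, C] = c2"
    and c1: "c1 = 1 \<or> c1 = -1" and c2: "c2 = 1 \<or> c2 = -1"
    and pX: "pm1_rv M X1" "pm1_rv M X2" "pm1_rv M Y1" "pm1_rv M Y2"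
    and eq: "\<forall>\<omega>. A1 \<omega> * (A2 \<omega> * (B1 \<omega> * (B2 \<omega> * 1))) = X1 \<omega> * Y1 \<omega> * X2 \<omega> * Y2 \<omega>"
  shows "corr M [A1, A2, B1, B2] = c1 * c2"
proof -
  have P: "prob_space M" and pA1: "pm1_rv M A1" and pA2: "pm1_rv M A2" and pB1: "pm1_rv M B1"
    and pB2: "pm1_rv M B2" and pC: "pm1_rv M C"
    using m unfolding base_model_def by auto
  interpret prob_space M by fact
  note pm = pX pC
  have ae1: "AE \<omega> in M. X1 \<omega> * Y1 \<omega> * C \<omega> = c1"
  proof (rule pm1_AE[OF P _ _ _ c1])
    show "\<forall>\<omega>\<in>space M. X1 \<omega> * Y1 \<omega> * C \<omega> \<in> {1, -1}"
      using pm unfolding pm1_rv_def by (intro ballI pm_mult) auto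
  qed (use pm h1 in \<open>auto simp: pm1_rv_def corr3\<close>)
  have ae2: "AE \<omega> in M. X2 \<omega> * Y2 \<omega> * C \<omega> = c2"
  proof (rule pm1_AE[OF P _ _ _ c2])
    show "\<forall>\<omega>\<in>space M. X2 \<omega> * Y2 \<omega> * C \<omega> \<in> {1, -1}"
      using pm unfolding pm1_rv_def by (intro ballI pm_mult) auto
  qed (use pm h2 in \<open>auto simp: pm1_rv_def corr3\<close>)
  have aeC: "AE \<omega> in M. (C \<omega> = 1 \<or> C \<omega> = -1) \<and> A1 \<omega> * (A2 \<omega> * (B1 \<omega> * (B2 \<omega> * 1))) = X1 \<omega> * Y1 \<omega> * X2 \<omega> * Y2 \<omega>"
    by (intro AE_I2) (use pC eq in \<open>auto simp: pm1_rv_def\<close>)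
  have ae: "AE \<omega> in M. A1 \<omega> * (A2 \<omega> * (B1 \<omega> * (B2 \<omega> * 1))) = c1 * c2"
    using ae1 ae2 aeC
  proof (eventually_elim)
    case (elim \<omega>)
    have cc: "C \<omega> * C \<omega> = 1" using elim(3) by auto
    have "X1 \<omega> * Y1 \<omega> * X2 \<omega> * Y2 \<omega> = (X1 \<omega> * Y1 \<omega> * C \<omega>) * (X2 \<omega> * Y2 \<omega> * C \<omega>)"
      using cc by (metis (no_types, opaque_lifting) mult.commute mult.left_commute mult_1_right)
    then show ?case using elim by simp
  qed
  have meas: "(\<lambda>\<omega>. A1 \<omega> * (A2 \<omega> * (B1 \<omega> * (B2 \<omega> * 1)))) \<in> borel_measurable M"
    using pA1 pA2 pB1 pB2 by (auto simp: pm1_rv_def)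
  have "corr M [A1, A2, B1, B2] = integral\<^sup>L M (\<lambda>\<omega>. A1 \<omega> * (A2 \<omega> * (B1 \<omega> * (B2 \<omega> * 1))))"
    by (simp add: corr_def)
  also have "\<dots> = integral\<^sup>L M (\<lambda>\<omega>. c1 * c2)"
    by (rule integral_cong_AE[OF meas _ ae]) simp
  also have "\<dots> = c1 * c2" by (simp add: prob_space)
  finally show ?thesis .
qed


definition M0 :: "nat measure" where "M0 = measure_pmf (pmf_of_set {0..<8})"
definition tab :: "real list \<Rightarrow> nat \<Rightarrow> real" where "tab xs \<omega> = xs ! (\<omega> mod 8)"

lemma shuffle:
  fixes g :: "nat \<Rightarrow> nat"
  assumes inj: "inj_on g {0..<8}" and im: "g ` {0..<8} = {0..<8}"
    and eq: "\<forall>\<omega>\<in>{0..<8}. \<forall>i\<in>S. X i (g \<omega>) = Y i \<omega>"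
  shows "joint_distr M0 X S = joint_distr M0 Y S"
proof -
  have Mg: "distr M0 (count_space UNIV) g = M0"
    unfolding M0_def map_pmf_rep_eq[symmetric]
    using map_pmf_of_set_inj[OF inj] im by simp
  have mX: "(\<lambda>\<omega>. \<lambda>i\<in>S. X i \<omega>) \<in> measurable (count_space UNIV) (PiM S (\<lambda>_. borel))"
    by (simp add: space_PiM)
  have "joint_distr M0 X S = distr (distr M0 (count_space UNIV) g) (PiM S (\<lambda>_. borel)) (\<lambda>\<omega>. \<lambda>i\<in>S. X i \<omega>)"
    unfolding joint_distr_def Mg ..
  also have "\<dots> = distr M0 (PiM S (\<lambda>_. borel)) ((\<lambda>\<omega>. \<lambda>i\<in>S. X i \<omega>) \<circ> g)"
    by (rule distr_distr[OF mX]) (simp add: M0_def)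
  also have "\<dots> = joint_distr M0 Y S"
    unfolding joint_distr_def
  proof (rule distr_cong_AE)
    show "AE x in M0. ((\<lambda>\<omega>. \<lambda>i\<in>S. X i \<omega>) \<circ> g) x = (\<lambda>i\<in>S. Y i x)"
      unfolding M0_def using eq by (auto simp: AE_measure_pmf_iff)
  qed (auto simp: M0_def space_PiM)
  finally show ?thesis .
qed

lemma sum8: "(\<Sum>r\<in>{0..<8::nat}. f r) = f 0 + f 1 + f 2 + f 3 + f 4 + f 5 + f 6 + (f 7 :: real)"
  by (simp add: eval_nat_numeral atLeast0LessThan)

lemma corr_M0: "corr M0 Xs = (\<Sum>\<omega>\<in>{0..<8}. prod_list (map (\<lambda>X. X \<omega>) Xs)) / 8"
  unfolding corr_def M0_def by (simp add: integral_pmf_of_set)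

lemma tab_eval: "tab [a0,a1,a2,a3,a4,a5,a6,a7] 0 = a0" "tab [a0,a1,a2,a3,a4,a5,a6,a7] 5 = a5"
  by (simp_all add: tab_def)

lemma pm1_tab: "length xs = 8 \<Longrightarrow> set xs \<subseteq> {1,-1} \<Longrightarrow> pm1_rv M0 (tab xs)"
proof -
  assume l: "length xs = 8" and s: "set xs \<subseteq> {1,-1}"
  have "\<And>\<omega>. xs ! (\<omega> mod 8) \<in> set xs" using l by (intro nth_mem) simp
  then show ?thesis using s unfolding pm1_rv_def tab_def M0_def by auto
qed

lemma "corr M0 [tab [1,-1,1,-1,1,-1,1,-1], tab [1,1,-1,-1,1,1,-1,-1]] = 0"
  by (simp add: corr_M0 sum8 tab_def)


definition "a1 = tab [1,-1,1,-1,1,-1,1,-1]"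
definition "a2 = tab [1,1,-1,-1,1,1,-1,-1]"
definition "b1 = tab [1,1,1,1,-1,-1,-1,-1]"
definition "b2 = tab [1,-1,-1,1,-1,1,1,-1]"
definition "b2' = tab [-1,1,1,-1,1,-1,-1,1]"
definition "c1 = tab [-1,1,-1,1,1,-1,1,-1]"
definition "c2 = tab [-1,-1,1,1,1,1,-1,-1]"
lemmas tabs = a1_def a2_def b1_def b2_def b2'_def c1_def c2_def

lemma ps0: "prob_space M0" unfolding M0_def by (rule prob_space_measure_pmf)

lemma mod1: "model1 M0 a1 a2 b1 b2 c1"
  unfolding model1_def base_model_def
  by (simp add: pm1_tab tabs corr_M0 sum8 tab_def ps0)

lemma mod2: "model2 M0 a1 a2 b1 b2' c2"
  unfolding model2_def base_model_def
  by (simp add: pm1_tab tabs corr_M0 sum8 tab_def ps0)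

lemma set8: "{0..<8::nat} = {0,1,2,3,4,5,6,7}"
  by (auto simp: eval_nat_numeral atLeast0LessThan)

definition "g0 \<omega> = [1,0,3,2,5,4,7,6::nat] ! \<omega>"
definition "g1 \<omega> = [2,3,0,1,6,7,4,5::nat] ! \<omega>"
definition "g2 \<omega> = [4,5,6,7,0,1,2,3::nat] ! \<omega>"

lemma g_props:
  "inj_on g0 {0..<8}" "g0 ` {0..<8} = {0..<8}"
  "inj_on g1 {0..<8}" "g1 ` {0..<8} = {0..<8}"
  "inj_on g2 {0..<8}" "g2 ` {0..<8} = {0..<8}"
  unfolding set8 by (auto simp: g0_def g1_def g2_def)

lemma part5: "S \<subset> {0..3} \<Longrightarrow> joint_distr M0 (fam4 a1 a2 b1 b2) S = joint_distr M0 (fam4 a1 a2 b1 b2') S"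
proof -
  assume S: "S \<subset> {0..3}"
  have S4: "S \<subseteq> {0,1,2,3}" using S by (auto simp: eval_nat_numeral)
  consider "3 \<notin> S" | "0 \<notin> S" | "1 \<notin> S" | "2 \<notin> S"
  proof -
    have set4: "{0..3::nat} = {0,1,2,3}" by auto
    show "(3 \<notin> S \<Longrightarrow> thesis) \<Longrightarrow> (0 \<notin> S \<Longrightarrow> thesis) \<Longrightarrow> (1 \<notin> S \<Longrightarrow> thesis) \<Longrightarrow> (2 \<notin> S \<Longrightarrow> thesis) \<Longrightarrow> thesis"
      using S unfolding set4 by blast
  qed
  then show ?thesis
  proof cases
    case 1
    show ?thesis
      by (rule shuffle[where g=id]) (use 1 S4 in \<open>auto simp: fam4_def\<close>)
  next
    case 2
    have "\<forall>\<omega>\<in>{0..<8}. \<forall>i\<in>{1,2,3}. fam4 a1 a2 b1 b2 i (g0 \<omega>) = fam4 a1 a2 b1 b2' i \<omega>"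
      unfolding set8 by (simp add: fam4_def tabs tab_def g0_def)
    then show ?thesis
      by (intro shuffle[OF g_props(1,2)]) (use 2 S4 in blast)
  next
    case 3
    have "\<forall>\<omega>\<in>{0..<8}. \<forall>i\<in>{0,2,3}. fam4 a1 a2 b1 b2 i (g1 \<omega>) = fam4 a1 a2 b1 b2' i \<omega>"
      unfolding set8 by (simp add: fam4_def tabs tab_def g1_def)
    then show ?thesis
      by (intro shuffle[OF g_props(3,4)]) (use 3 S4 in blast)
  next
    case 4
    have "\<forall>\<omega>\<in>{0..<8}. \<forall>i\<in>{0,1,3}. fam4 a1 a2 b1 b2 i (g2 \<omega>) = fam4 a1 a2 b1 b2' i \<omega>"
      unfolding set8 by (simp add: fam4_def tabs tab_def g2_def)
    then show ?thesis
      by (intro shuffle[OF g_props(5,6)]) (use 4 S4 in blast)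
  qed
qed


theorem mainTheorem4:
  shows "(\<exists>(M :: nat measure) A1 A2 B1 B2 C1. model1 M A1 A2 B1 B2 C1)
    \<and> (\<exists>(M :: nat measure) A1 A2 B1 B2 C2. model2 M A1 A2 B1 B2 C2)
    \<and> (\<forall>(M :: 'a measure) A1 A2 B1 B2 C1. model1 M A1 A2 B1 B2 C1 \<longrightarrow> corr M [A1, A2, B1, B2] = 1)
    \<and> (\<forall>(M :: 'b measure) A1 A2 B1 B2 C2. model2 M A1 A2 B1 B2 C2 \<longrightarrow> corr M [A1, A2, B1, B2] = -1)
    \<and> (\<exists>(M :: nat measure) A1 A2 B1 B2 C1 (M' :: nat measure) A1' A2' B1' B2' C2.
         model1 M A1 A2 B1 B2 C1 \<and> model2 M' A1' A2' B1' B2' C2 \<and>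
         (\<forall>S. S \<subset> {0..3} \<longrightarrow>
            joint_distr M (fam4 A1 A2 B1 B2) S = joint_distr M' (fam4 A1' A2' B1' B2') S))"
proof (intro conjI allI impI)
  show "\<exists>(M :: nat measure) A1 A2 B1 B2 C1. model1 M A1 A2 B1 B2 C1" using mod1 by blast
  show "\<exists>(M :: nat measure) A1 A2 B1 B2 C2. model2 M A1 A2 B1 B2 C2" using mod2 by blast
  show "\<exists>(M :: nat measure) A1 A2 B1 B2 C1 (M' :: nat measure) A1' A2' B1' B2' C2.
         model1 M A1 A2 B1 B2 C1 \<and> model2 M' A1' A2' B1' B2' C2 \<and>
         (\<forall>S. S \<subset> {0..3} \<longrightarrow>
            joint_distr M (fam4 A1 A2 B1 B2) S = joint_distr M' (fam4 A1' A2' B1' B2') S)"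
    using mod1 mod2 part5 by blast
next
  fix M :: "'a measure" and A1 A2 B1 B2 C1
  assume "model1 M A1 A2 B1 B2 C1"
  then have "corr M [A1, A2, B1, B2] = (-1) * (-1)"
    unfolding model1_def base_model_def
    by (intro part3[of M A1 A2 B1 B2 C1 A1 B1 _ A2 B2]) (auto simp: model1_def base_model_def)
  then show "corr M [A1, A2, B1, B2] = 1" by simp
next
  fix M :: "'b measure" and A1 A2 B1 B2 C2
  assume h: "model2 M A1 A2 B1 B2 C2"
  then have "corr M [A1, A2, B1, B2] = (-1) * 1"
    unfolding model2_def base_model_def
    by (intro part3[of M A1 A2 B1 B2 C2 A2 B1 _ A1 B2]) (auto simp: model2_def base_model_def)
  then show "corr M [A1, A2, B1, B2] = -1" by simp
qed
end
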